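(* Let $\mathcal A\in\mathbb Q^{n\times n\times n_3}$. Then $\mathtt{bcirc_z}(\mathcal A^k)=\mathtt{bcirc_z}(\mathcal A)^k$ for every positive integer $k$. If moreover $\mathcal A$ is invertible, then $\mathtt{bcirc_z}(\mathcal A^{-1})=\mathtt{bcirc_z}(\mathcal A)^{-1}$.
   Context: $\mathbb Q$ denotes the real quaternions $a_0+a_1\mathbf i+a_2\mathbf j+a_3\mathbf k$ with the usual Hamilton multiplication; $\mathbb C$ is identified with $\{a_0+a_1\mathbf i\}$. Every quaternion array $A=A_0+A_1\mathbf i+A_2\mathbf j+A_3\mathbf k$ (real $A_t$) is written uniquely as $A=A_{\mathbf d}+\mathbf jA_{\mathbf c}$ with $A_{\mathbf d}=A_0+A_1\mathbf i$, $A_{\mathbf c}=A_2-A_3\mathbf i$ complex. For $\mathcal A\in\mathbb Q^{n_1\times n_2\times n_3}$, $\mathcal A^{(s)}=\mathcal A(:,:,s)$. For a complex tensor $\mathcal C$, $\mathtt{bcirc}(\mathcal C)$ is the $n_1n_3\times n_2n_3$ block circulant matrix with $(p,q)$ block $\mathcal C^{(((p-q)\bmod n_3)+1)}$. $P_{n_3}$ is the permutation matrix with first row $e_1^T$ and $r$-th row $e_{n_3+2-r}^T$ for $r\ge2$. $\mathtt{bcirc_z}(\mathcal A)=\mathtt{bcirc}(\mathcal A_{\mathbf d})+\mathbf j\,\mathtt{bcirc}(\mathcal A_{\mathbf c})(P_{n_3}\otimes I_{n_2})$. $\mathtt{unfold}(\mathcal B)=[\mathcal B^{(1)};\dots;\mathcal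 B^{(n_3)}]$, $\mathtt{fold}$ its inverse. QT-product: $\mathcal A*_Q\mathcal B=\mathtt{fold}(\mathtt{bcirc_z}(\mathcal A)\,\mathtt{unfold}(\mathcal B))$. The identity tensor $\mathcal I\in\mathbb Q^{n\times n\times n_3}$ has first frontal slice $I_n$ and all other frontal slices zero. Powers: $\mathcal A^1=\mathcal A$, $\mathcal A^{k+1}=\mathcal A*_Q\mathcal A^k$. $\mathcal A$ is invertible if there is $\mathcal A^{-1}$ with $\mathcal A*_Q\mathcal A^{-1}=\mathcal A^{-1}*_Q\mathcal A=\mathcal I$. *)

theory Defs
  imports Complex_Main "Jordan_Normal_Form.Matrix"
begin

datatype quat = Quat (q0: real) (q1: real) (q2: real) (q3: real)

instantiation quat :: ring_1
begin
definition "0 = Quat 0 0 0 0"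
definition "1 = Quat 1 0 0 0"
definition "a + b = Quat (q0 a + q0 b) (q1 a + q1 b) (q2 a + q2 b) (q3 a + q3 b)"
definition "a - b = Quat (q0 a - q0 b) (q1 a - q1 b) (q2 a - q2 b) (q3 a - q3 b)"
definition "- a = Quat (- q0 a) (- q1 a) (- q2 a) (- q3 a)"
definition "a * b = Quat
   (q0 a * q0 b - q1 a * q1 b - q2 a * q2 b - q3 a * q3 b)
   (q0 a * q1 b + q1 a * q0 b + q2 a * q3 b - q3 a * q2 b)
   (q0 a * q2 b - q1 a * q3 b + q2 a * q0 b + q3 a * q1 b)
   (q0 a * q3 b + q1 a * q2 b - q2 a * q1 b + q3 a * q0 b)"
instance
  by standard (simp_all add: zero_quat_def one_quat_def plus_quat_def minus_quat_def
      uminus_quat_def times_quat_def quat.expand algebra_simps)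
end

definition quat_j :: quat where "quat_j = Quat 0 0 1 0"

definition of_cplx :: "complex \<Rightarrow> quat" where
  "of_cplx z = Quat (Re z) (Im z) 0 0"

text \<open>q = q_d + j q_c with q_d = a0 + a1 i and q_c = a2 - a3 i.\<close>
definition quat_d :: "quat \<Rightarrow> complex" where "quat_d q = Complex (q0 q) (q1 q)"
definition quat_c :: "quat \<Rightarrow> complex" where "quat_c q = Complex (q2 q) (- q3 q)"

text \<open>A tensor in K^(n1 x n2 x n3) is the list of its n3 frontal slices
  (slice s+1 of the paper is element s of the list), each an n1 x n2 matrix.\<close>
definition tensor_dim :: "nat \<Rightarrow> nat \<Rightarrow> nat \<Rightarrow> 'a mat list \<Rightarrow> bool" where
  "tensor_dim n1 n2 n3 T \<longleftrightarrow> length T = n3 \<and> (\<forall>S\<in>set T. S \<in> carrier_mat n1 n2)"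

definition tensor_d :: "quat mat list \<Rightarrow> complex mat list" where
  "tensor_d T = map (map_mat quat_d) T"
definition tensor_c :: "quat mat list \<Rightarrow> complex mat list" where
  "tensor_c T = map (map_mat quat_c) T"

definition bcirc :: "nat \<Rightarrow> nat \<Rightarrow> nat \<Rightarrow> 'a mat list \<Rightarrow> 'a mat" where
  "bcirc n1 n2 n3 C = mat (n1 * n3) (n2 * n3)
     (\<lambda>(i, j). (C ! ((i div n1 + n3 - j div n2) mod n3)) $$ (i mod n1, j mod n2))"

text \<open>Permutation matrix P: first row e_1, r-th row e_(n3+2-r) for r >= 2
  (0-indexed: row r has its 1 in column (n3 - r) mod n3).\<close>
definition perm_P :: "nat \<Rightarrow> 'a :: {zero,one} mat" where
  "perm_P n3 = mat n3 n3 (\<lambda>(r, c). if c = (n3 - r) mod n3 then 1 else 0)"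

definition kron :: "'a :: times mat \<Rightarrow> 'a mat \<Rightarrow> 'a mat" where
  "kron A B = mat (dim_row A * dim_row B) (dim_col A * dim_col B)
     (\<lambda>(i, j). A $$ (i div dim_row B, j div dim_col B) * B $$ (i mod dim_row B, j mod dim_col B))"

definition bcirc_z :: "nat \<Rightarrow> nat \<Rightarrow> nat \<Rightarrow> quat mat list \<Rightarrow> quat mat" where
  "bcirc_z n1 n2 n3 A =
     map_mat of_cplx (bcirc n1 n2 n3 (tensor_d A)) +
     quat_j \<cdot>\<^sub>m (map_mat of_cplx (bcirc n1 n2 n3 (tensor_c A)) * kron (perm_P n3) (1\<^sub>m n2))"

definition unfold_t :: "nat \<Rightarrow> nat \<Rightarrow> nat \<Rightarrow> 'a mat list \<Rightarrow> 'a mat" where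
  "unfold_t n2 n4 n3 B = mat (n2 * n3) n4 (\<lambda>(i, j). (B ! (i div n2)) $$ (i mod n2, j))"

definition fold_t :: "nat \<Rightarrow> nat \<Rightarrow> nat \<Rightarrow> 'a mat \<Rightarrow> 'a mat list" where
  "fold_t n1 n4 n3 M = map (\<lambda>s. mat n1 n4 (\<lambda>(i, j). M $$ (s * n1 + i, j))) [0..<n3]"

definition qt_prod :: "nat \<Rightarrow> nat \<Rightarrow> nat \<Rightarrow> nat \<Rightarrow> quat mat list \<Rightarrow> quat mat list \<Rightarrow> quat mat list" where
  "qt_prod n1 n2 n4 n3 A B = fold_t n1 n4 n3 (bcirc_z n1 n2 n3 A * unfold_t n2 n4 n3 B)"

definition qt_id :: "nat \<Rightarrow> nat \<Rightarrow> quat mat list" where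
  "qt_id n n3 = map (\<lambda>s. if s = 0 then 1\<^sub>m n else 0\<^sub>m n n) [0..<n3]"

text \<open>Powers: A^1 = A, A^(k+1) = A *_Q A^k (only k >= 1 is meaningful).\<close>
fun qt_pow :: "nat \<Rightarrow> nat \<Rightarrow> quat mat list \<Rightarrow> nat \<Rightarrow> quat mat list" where
  "qt_pow n n3 A 0 = qt_id n n3"
| "qt_pow n n3 A (Suc 0) = A"
| "qt_pow n n3 A (Suc (Suc k)) = qt_prod n n n n3 A (qt_pow n n3 A (Suc k))"

definition qt_is_inverse :: "nat \<Rightarrow> nat \<Rightarrow> quat mat list \<Rightarrow> quat mat list \<Rightarrow> bool" where
  "qt_is_inverse n n3 A B \<longleftrightarrow> tensor_dim n n n3 B \<and>
     qt_prod n n n n3 A B = qt_id n n3 \<and> qt_prod n n n n3 B A = qt_id n n3"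

definition qt_invertible :: "nat \<Rightarrow> nat \<Rightarrow> quat mat list \<Rightarrow> bool" where
  "qt_invertible n n3 A \<longleftrightarrow> (\<exists>B. qt_is_inverse n n3 A B)"

definition qt_inv :: "nat \<Rightarrow> nat \<Rightarrow> quat mat list \<Rightarrow> quat mat list" where
  "qt_inv n n3 A = (THE B. qt_is_inverse n n3 A B)"

end

theory Submission
  imports Defs
begin

lemma sum_lessThan_add_split:
  "(\<Sum>l<a+b. g l) = (\<Sum>l<a. g l) + (\<Sum>m<b. g (a+m))" for g :: "nat \<Rightarrow> 'a::comm_monoid_add"
  by (induction b) (auto simp: add.assoc)

lemma sum_split_blocks:
  "(\<Sum>l<n*N. g l) = (\<Sum>q<N. \<Sum>m<n. g (q*n+m))" for g :: "nat \<Rightarrow> 'a::comm_monoid_add"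
proof (induction N)
  case 0 then show ?case by simp
next
  case (Suc N)
  have "n * Suc N = n*N + n" by simp
  then show ?case using Suc by (simp only: sum_lessThan_add_split) (simp add: mult.commute)
qed

lemma mult_mat_sum:
  "i < dim_row A \<Longrightarrow> j < dim_col B \<Longrightarrow> dim_col A = dim_row B \<Longrightarrow>
   (A * B) $$ (i,j) = (\<Sum>l<dim_row B. A $$ (i,l) * B $$ (l,j))"
  by (simp add: scalar_prod_def atLeast0LessThan)

definition tf :: "nat \<Rightarrow> 'a list \<Rightarrow> int \<Rightarrow> 'a" where
  "tf N A s = A ! nat (s mod int N)"

lemma tf_mod: "x mod int N = y mod int N \<Longrightarrow> tf N A x = tf N A y"
  by (simp add: tf_def)

lemma tf_nat: "q < N \<Longrightarrow> tf N A (int q) = A ! q"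
  by (simp add: tf_def)

lemma shift_sum:
  fixes f :: "int \<Rightarrow> 'a::comm_monoid_add"
  assumes N: "0 < N" and per: "\<And>t. f t = f (t mod int N)"
  shows "(\<Sum>q<N. f (int q + c)) = (\<Sum>q<N. f (int q))"
proof -
  let ?h = "\<lambda>q. nat ((int q + c) mod int N)"
  have b: "bij_betw ?h {..<N} {..<N}"
    apply (rule bij_betw_byWitness[where f' = "\<lambda>q. nat ((int q - c) mod int N)"])
    using N by (auto simp: mod_simps nat_less_iff)
  have "(\<Sum>q<N. f (int q + c)) = (\<Sum>q<N. f (int (?h q)))"
    apply (rule sum.cong[OF refl])
    using N by (subst per) simp
  also have "\<dots> = (\<Sum>q<N. f (int q))"
    using sum.reindex_bij_betw[OF b, of "\<lambda>q. f (int q)"] by simp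
  finally show ?thesis .
qed

definition dpart :: "quat \<Rightarrow> quat" where "dpart x = Quat (q0 x) (q1 x) 0 0"
definition cpart :: "quat \<Rightarrow> quat" where "cpart x = Quat 0 0 (q2 x) (q3 x)"

lemmas quat_defs = zero_quat_def one_quat_def plus_quat_def minus_quat_def
      uminus_quat_def times_quat_def dpart_def cpart_def

lemma of_cplx_d: "of_cplx (quat_d x) = dpart x"
  by (simp add: of_cplx_def quat_d_def dpart_def)
lemma j_of_cplx_c: "quat_j * of_cplx (quat_c x) = cpart x"
  by (simp add: of_cplx_def quat_c_def cpart_def quat_j_def quat_defs)
lemma quat_split: "x = dpart x + cpart x"
  by (simp add: quat_defs)
lemma dpart_add[simp]: "dpart (x + y) = dpart x + dpart y"
  by (simp add: quat_defs)
lemma cpart_add[simp]: "cpart (x + y) = cpart x + cpart y"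
  by (simp add: quat_defs)
lemma dpart_0[simp]: "dpart 0 = 0" by (simp add: quat_defs)
lemma cpart_0[simp]: "cpart 0 = 0" by (simp add: quat_defs)
lemma dpart_1[simp]: "dpart 1 = 1" by (simp add: quat_defs)
lemma cpart_1[simp]: "cpart 1 = 0" by (simp add: quat_defs)
lemma dpart_sum: "dpart (sum f S) = (\<Sum>x\<in>S. dpart (f x))"
  by (induction S rule: infinite_finite_induct) auto
lemma cpart_sum: "cpart (sum f S) = (\<Sum>x\<in>S. cpart (f x))"
  by (induction S rule: infinite_finite_induct) auto
lemma dpart_mult: "dpart (x * y) = dpart x * dpart y + cpart x * cpart y"
  by (simp add: quat_defs)
lemma cpart_mult: "cpart (x * y) = dpart x * cpart y + cpart x * dpart y"
  by (simp add: quat_defs)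
lemma dpart_mix[simp]: "dpart (dpart x + cpart y) = dpart x"
  by (simp add: quat_defs)
lemma cpart_mix[simp]: "cpart (dpart x + cpart y) = cpart y"
  by (simp add: quat_defs)
lemma dpart_dpart[simp]: "dpart (dpart x) = dpart x" by (simp add: quat_defs)
lemma cpart_cpart[simp]: "cpart (cpart x) = cpart x" by (simp add: quat_defs)
lemma dpart_cpart[simp]: "dpart (cpart x) = 0" by (simp add: quat_defs)
lemma cpart_dpart[simp]: "cpart (dpart x) = 0" by (simp add: quat_defs)
lemma quat_eqI: "dpart x = dpart y \<Longrightarrow> cpart x = cpart y \<Longrightarrow> x = y"
  by (metis quat_split)

lemma nat_sub_mod_int:
  assumes "q \<le> N" "0 < N"
  shows "(p + N - q) mod N = nat ((int p - int q) mod int N)"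
proof -
  have "int ((p + N - q) mod N) = (int p + int N - int q) mod int N"
    using assms by (simp add: zmod_int of_nat_diff)
  also have "\<dots> = ((int p - int q) + int N) mod int N" by (simp add: algebra_simps)
  also have "\<dots> = (int p - int q) mod int N" by (rule mod_add_self2)
  finally show ?thesis by linarith
qed

lemma bcirc_index:
  assumes "i < n*N" "j < n*N" "0 < N"
  shows "bcirc n n N C $$ (i,j) = tf N C (int (i div n) - int (j div n)) $$ (i mod n, j mod n)"
proof -
  have "j div n < N" using assms by (simp add: less_mult_imp_div_less mult.commute)
  then show ?thesis using assms unfolding bcirc_def tf_def
    by (simp add: nat_sub_mod_int)
qed

lemma block_lt: "(q::nat) < N \<Longrightarrow> m < n \<Longrightarrow> q*n+m < N*n"
proof -
  assume a: "q < N" "m < n"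
  have "q*n+m < (q+1)*n" using a by simp
  also have "\<dots> \<le> N*n" using a by (intro mult_le_mono1) simp
  finally show ?thesis .
qed

lemma perm_cond:
  assumes "(q::nat) < N" "c < N"
  shows "(c = (N - q) mod N) = (q = (N - c) mod N)"
  using assms by (cases "q = 0"; cases "c = 0") auto

lemma kron_P_right:
  fixes M :: "'a::semiring_1 mat"
  assumes "dim_col M = N*n" "i < dim_row M" "j < N*n" "0 < N"
  shows "(M * kron (perm_P N) (1\<^sub>m n)) $$ (i,j) = M $$ (i, ((N - j div n) mod N)*n + j mod n)"
proof -
  have jd: "j div n < N" using assms by (simp add: less_mult_imp_div_less)
  have n: "0 < n" using assms by (cases n) auto
  let ?q0 = "(N - j div n) mod N"
  have q0: "?q0 < N" using assms by simp
  have "(M * kron (perm_P N) (1\<^sub>m n)) $$ (i,j) = (\<Sum>l<N*n. M $$ (i,l) * kron (perm_P N) (1\<^sub>m n) $$ (l,j))"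
    using assms by (subst mult_mat_sum) (auto simp: kron_def perm_P_def)
  also have "\<dots> = (\<Sum>q<N. \<Sum>m<n. M $$ (i,q*n+m) * kron (perm_P N) (1\<^sub>m n) $$ (q*n+m,j))"
    by (subst mult.commute, rule sum_split_blocks)
  also have "\<dots> = (\<Sum>q<N. \<Sum>m<n. if q = ?q0 then (if m = j mod n then M $$ (i,q*n+m) else 0) else 0)"
  proof (intro sum.cong refl)
    fix q m assume q: "q \<in> {..<N}" and m: "m \<in> {..<n}"
    have lt: "q*n+m < N*n" using q m by (simp add: block_lt)
    have "kron (perm_P N) (1\<^sub>m n) $$ (q*n+m,j) = (if j div n = (N - q) mod N then 1 else 0) * (if m = j mod n then 1 else 0)"
      using lt assms q m n jd by (simp add: kron_def perm_P_def)
    note K = this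
    show "M $$ (i,q*n+m) * kron (perm_P N) (1\<^sub>m n) $$ (q*n+m,j) =
      (if q = ?q0 then (if m = j mod n then M $$ (i,q*n+m) else 0) else 0)"
      unfolding K using perm_cond[of q N "j div n"] q jd by auto
  qed
  also have "\<dots> = (\<Sum>q<N. if q = ?q0 then (\<Sum>m<n. if m = j mod n then M $$ (i,q*n+m) else 0) else 0)"
    by (intro sum.cong refl) simp
  also have "\<dots> = M $$ (i, ?q0*n + j mod n)"
    using q0 n by (simp add: sum.delta)
  finally show ?thesis .
qed

lemma bcirc_dims[simp]: "dim_row (bcirc n1 n2 N C) = n1*N" "dim_col (bcirc n1 n2 N C) = n2*N"
  by (simp_all add: bcirc_def)

lemma tf_in_set:
  assumes "length A = N" "0 < N"
  shows "tf N A x \<in> set A"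
proof -
  have "nat (x mod int N) < N" using assms by (simp add: nat_less_iff)
  then show ?thesis using assms unfolding tf_def by simp
qed

lemma tf_carrier:
  assumes "tensor_dim n1 n2 N A" "0 < N"
  shows "tf N A x \<in> carrier_mat n1 n2"
  using assms tf_in_set[of A N x] unfolding tensor_dim_def by auto

lemma tf_map:
  assumes "tensor_dim n n N A" "0 < N" "a < n" "b < n"
  shows "tf N (map (map_mat f) A) x $$ (a,b) = f (tf N A x $$ (a,b))"
proof -
  have "nat (x mod int N) < N" using assms by (simp add: nat_less_iff)
  moreover have "length A = N" using assms by (simp add: tensor_dim_def)
  ultimately show ?thesis using tf_carrier[OF assms(1,2), of x] assms unfolding tf_def by auto
qed

lemma neg_mod_int:
  assumes "(c::nat) < N"
  shows "int ((N - c) mod N) mod int N = (- int c) mod int N"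
proof (cases "c = 0")
  case True then show ?thesis by simp
next
  case False
  then have "int ((N - c) mod N) = - int c + int N" using assms by simp
  then show ?thesis by (simp add: mod_add_self2)
qed

lemma bcirc_z_index:
  assumes td: "tensor_dim n n N A" and n: "0 < n" and N: "0 < N" and ij: "i < n*N" "j < n*N"
  shows "bcirc_z n n N A $$ (i,j) =
    dpart (tf N A (int (i div n) - int (j div n)) $$ (i mod n, j mod n)) +
    cpart (tf N A (int (i div n) + int (j div n)) $$ (i mod n, j mod n))"
proof -
  let ?M = "map_mat of_cplx (bcirc n n N (tensor_c A))"
  let ?q0 = "(N - j div n) mod N"
  let ?l0 = "?q0 * n + j mod n"
  have jd: "j div n < N" using ij by (simp add: less_mult_imp_div_less mult.commute)
  have q0: "?q0 < N" using N by simp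
  have l0: "?l0 < n*N" using block_lt[OF q0, of "j mod n" n] n by (simp add: mult.commute)
  have l0d: "?l0 div n = ?q0" "?l0 mod n = j mod n" using n by auto
  have dimM: "dim_row ?M = n*N" "dim_col ?M = n*N" by (simp_all add: bcirc_def)
  have "(?M * kron (perm_P N) (1\<^sub>m n)) $$ (i,j) = ?M $$ (i, ?l0)"
    using kron_P_right[of ?M N n i j] dimM ij N by (simp add: mult.commute)
  also have "\<dots> = of_cplx (quat_c (tf N A (int (i div n) - int ?q0) $$ (i mod n, j mod n)))"
    using dimM ij l0 l0d N n td
    by (simp add: bcirc_index tensor_c_def tf_map)
  also have "tf N A (int (i div n) - int ?q0) = tf N A (int (i div n) + int (j div n))"
  proof (rule tf_mod)
    have "(int (i div n) - int ?q0) mod int N = (int (i div n) - int ?q0 mod int N) mod int N"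
      by (simp add: mod_diff_right_eq)
    also have "\<dots> = (int (i div n) - (- int (j div n)) mod int N) mod int N"
      using neg_mod_int[OF jd] by simp
    also have "\<dots> = (int (i div n) + int (j div n)) mod int N"
      by (simp add: mod_diff_right_eq)
    finally show "(int (i div n) - int ?q0) mod int N = (int (i div n) + int (j div n)) mod int N" .
  qed
  finally have P2: "(?M * kron (perm_P N) (1\<^sub>m n)) $$ (i,j) =
     of_cplx (quat_c (tf N A (int (i div n) + int (j div n)) $$ (i mod n, j mod n)))" .
  have P1: "map_mat of_cplx (bcirc n n N (tensor_d A)) $$ (i,j) =
     of_cplx (quat_d (tf N A (int (i div n) - int (j div n)) $$ (i mod n, j mod n)))"
    using ij N n td by (simp add: bcirc_index tensor_d_def tf_map)
  show ?thesis
    unfolding bcirc_z_def using ij dimM P1 P2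
    by (simp add: kron_def perm_P_def of_cplx_d j_of_cplx_c mult.commute)
qed

lemma bcirc_z_carrier: "bcirc_z n n N A \<in> carrier_mat (n*N) (n*N)"
proof -
  have "dim_row (bcirc_z n n N A) = n*N" "dim_col (bcirc_z n n N A) = N*n"
    unfolding bcirc_z_def by (simp_all add: kron_def perm_P_def)
  then show ?thesis unfolding carrier_mat_def by (simp add: mult.commute)
qed

lemma qt_prod_dim: "tensor_dim n n N (qt_prod n n n N A B)"
  by (auto simp: tensor_dim_def qt_prod_def fold_t_def)

lemma qt_prod_slice:
  assumes tA: "tensor_dim n n N A" and tB: "tensor_dim n n N B" and n: "0 < n" and N: "0 < N"
    and s: "s < N" and ab: "a < n" "b < n"
  shows "(qt_prod n n n N A B ! s) $$ (a,b) = (\<Sum>q<N. \<Sum>m<n.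
     (dpart (tf N A (int s - int q) $$ (a,m)) + cpart (tf N A (int s + int q) $$ (a,m))) * (B!q) $$ (m,b))"
proof -
  have lt: "s*n+a < n*N" using block_lt[OF s ab(1)] by (simp add: mult.commute)
  have "(qt_prod n n n N A B ! s) $$ (a,b) = (bcirc_z n n N A * unfold_t n n N B) $$ (s*n+a, b)"
    using s ab by (simp add: qt_prod_def fold_t_def)
  also have "\<dots> = (\<Sum>l<n*N. bcirc_z n n N A $$ (s*n+a, l) * unfold_t n n N B $$ (l, b))"
    using lt ab bcirc_z_carrier[of n N A] by (subst mult_mat_sum) (auto simp: unfold_t_def)
  also have "\<dots> = (\<Sum>q<N. \<Sum>m<n. bcirc_z n n N A $$ (s*n+a, q*n+m) * unfold_t n n N B $$ (q*n+m, b))"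
    by (rule sum_split_blocks)
  also have "\<dots> = (\<Sum>q<N. \<Sum>m<n.
     (dpart (tf N A (int s - int q) $$ (a,m)) + cpart (tf N A (int s + int q) $$ (a,m))) * (B!q) $$ (m,b))"
  proof (intro sum.cong refl)
    fix q m assume q: "q \<in> {..<N}" and m: "m \<in> {..<n}"
    have lt2: "q*n+m < n*N" using block_lt[of q N m n] q m by (simp add: mult.commute)
    show "bcirc_z n n N A $$ (s*n+a, q*n+m) * unfold_t n n N B $$ (q*n+m, b) =
     (dpart (tf N A (int s - int q) $$ (a,m)) + cpart (tf N A (int s + int q) $$ (a,m))) * (B!q) $$ (m,b)"
      using bcirc_z_index[OF tA n N lt lt2] lt2 ab q m n by (simp add: unfold_t_def)
  qed
  finally show ?thesis .
qed

lemma qt_prod_tf: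
  assumes tA: "tensor_dim n n N A" and tB: "tensor_dim n n N B" and n: "0 < n" and N: "0 < N"
    and ab: "a < n" "b < n"
  shows "tf N (qt_prod n n n N A B) t $$ (a,b) = (\<Sum>q<N. \<Sum>m<n.
     (dpart (tf N A (t - int q) $$ (a,m)) + cpart (tf N A (t + int q) $$ (a,m))) * tf N B (int q) $$ (m,b))"
proof -
  let ?s = "nat (t mod int N)"
  have s: "?s < N" using N by (simp add: nat_less_iff)
  have si: "int ?s = t mod int N" using N by simp
  have "tf N (qt_prod n n n N A B) t $$ (a,b) = (qt_prod n n n N A B ! ?s) $$ (a,b)"
    by (simp add: tf_def)
  also have "\<dots> = (\<Sum>q<N. \<Sum>m<n.
     (dpart (tf N A (int ?s - int q) $$ (a,m)) + cpart (tf N A (int ?s + int q) $$ (a,m))) * (B!q) $$ (m,b))"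
    by (rule qt_prod_slice[OF tA tB n N s ab])
  also have "\<dots> = (\<Sum>q<N. \<Sum>m<n.
     (dpart (tf N A (t - int q) $$ (a,m)) + cpart (tf N A (t + int q) $$ (a,m))) * tf N B (int q) $$ (m,b))"
  proof (intro sum.cong refl)
    fix q m assume q: "q \<in> {..<N}" and m: "m \<in> {..<n}"
    have e1: "tf N A (int ?s - int q) = tf N A (t - int q)"
      by (rule tf_mod) (unfold si, rule mod_diff_left_eq)
    have e2: "tf N A (int ?s + int q) = tf N A (t + int q)"
      by (rule tf_mod) (unfold si, rule mod_add_left_eq)
    show "(dpart (tf N A (int ?s - int q) $$ (a,m)) + cpart (tf N A (int ?s + int q) $$ (a,m))) * (B!q) $$ (m,b) =
      (dpart (tf N A (t - int q) $$ (a,m)) + cpart (tf N A (t + int q) $$ (a,m))) * tf N B (int q) $$ (m,b)"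
      unfolding e1 e2 using q by (simp add: tf_nat)
  qed
  finally show ?thesis .
qed

lemma core_d:
  fixes FA FB :: "int \<Rightarrow> nat \<Rightarrow> quat"
  assumes N: "0 < N" and pA: "\<And>x m. FA x m = FA (x mod int N) m" and pB: "\<And>x m. FB x m = FB (x mod int N) m"
  shows "dpart (\<Sum>q<N. \<Sum>m<n. (dpart (FA (p - int q) m) + cpart (FA (p + int q) m)) *
              (dpart (FB (int q - r) m) + cpart (FB (int q + r) m)))
       = dpart (\<Sum>q<N. \<Sum>m<n. (dpart (FA (p - r - int q) m) + cpart (FA (p - r + int q) m)) * FB (int q) m)"
proof -
  define f where "f t = (\<Sum>m<n. dpart (FA (p - r - t) m) * dpart (FB t m))" for t
  define g where "g t = (\<Sum>m<n. cpart (FA (p - r + t) m) * cpart (FB t m))" for t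
  have fp: "f t = f (t mod int N)" for t
  proof -
    have "FA (p - r - t) m = FA (p - r - t mod int N) m" for m
      by (subst pA, subst (2) pA) (simp add: mod_diff_right_eq)
    moreover have "FB t m = FB (t mod int N) m" for m by (rule pB)
    ultimately show ?thesis unfolding f_def by simp
  qed
  have gp: "g t = g (t mod int N)" for t
  proof -
    have "FA (p - r + t) m = FA (p - r + t mod int N) m" for m
      by (subst pA, subst (2) pA) (simp add: mod_add_right_eq)
    moreover have "FB t m = FB (t mod int N) m" for m by (rule pB)
    ultimately show ?thesis unfolding g_def by simp
  qed
  have L: "dpart (\<Sum>q<N. \<Sum>m<n. (dpart (FA (p - int q) m) + cpart (FA (p + int q) m)) *
              (dpart (FB (int q - r) m) + cpart (FB (int q + r) m)))
     = (\<Sum>q<N. f (int q + (- r))) + (\<Sum>q<N. g (int q + r))"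
    unfolding f_def g_def dpart_sum dpart_mult sum.distrib[symmetric]
    by (intro sum.cong refl) (simp add: algebra_simps)
  have R: "dpart (\<Sum>q<N. \<Sum>m<n. (dpart (FA (p - r - int q) m) + cpart (FA (p - r + int q) m)) * FB (int q) m)
     = (\<Sum>q<N. f (int q)) + (\<Sum>q<N. g (int q))"
    unfolding f_def g_def dpart_sum dpart_mult sum.distrib[symmetric]
    by (intro sum.cong refl) (simp add: algebra_simps)
  show ?thesis unfolding L R shift_sum[of N f, OF N fp] shift_sum[of N g, OF N gp] ..
qed

lemma core_c:
  fixes FA FB :: "int \<Rightarrow> nat \<Rightarrow> quat"
  assumes N: "0 < N" and pA: "\<And>x m. FA x m = FA (x mod int N) m" and pB: "\<And>x m. FB x m = FB (x mod int N) m"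
  shows "cpart (\<Sum>q<N. \<Sum>m<n. (dpart (FA (p - int q) m) + cpart (FA (p + int q) m)) *
              (dpart (FB (int q - r) m) + cpart (FB (int q + r) m)))
       = cpart (\<Sum>q<N. \<Sum>m<n. (dpart (FA (p + r - int q) m) + cpart (FA (p + r + int q) m)) * FB (int q) m)"
proof -
  define f where "f t = (\<Sum>m<n. dpart (FA (p + r - t) m) * cpart (FB t m))" for t
  define g where "g t = (\<Sum>m<n. cpart (FA (p + r + t) m) * dpart (FB t m))" for t
  have fp: "f t = f (t mod int N)" for t
  proof -
    have "FA (p + r - t) m = FA (p + r - t mod int N) m" for m
      by (subst pA, subst (2) pA) (simp add: mod_diff_right_eq)
    moreover have "FB t m = FB (t mod int N) m" for m by (rule pB)
    ultimately show ?thesis unfolding f_def by simp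
  qed
  have gp: "g t = g (t mod int N)" for t
  proof -
    have "FA (p + r + t) m = FA (p + r + t mod int N) m" for m
      by (subst pA, subst (2) pA) (simp add: mod_add_right_eq)
    moreover have "FB t m = FB (t mod int N) m" for m by (rule pB)
    ultimately show ?thesis unfolding g_def by simp
  qed
  have L: "cpart (\<Sum>q<N. \<Sum>m<n. (dpart (FA (p - int q) m) + cpart (FA (p + int q) m)) *
              (dpart (FB (int q - r) m) + cpart (FB (int q + r) m)))
     = (\<Sum>q<N. f (int q + r)) + (\<Sum>q<N. g (int q + (- r)))"
    unfolding f_def g_def cpart_sum cpart_mult sum.distrib[symmetric]
    by (intro sum.cong refl) (simp add: algebra_simps)
  have R: "cpart (\<Sum>q<N. \<Sum>m<n. (dpart (FA (p + r - int q) m) + cpart (FA (p + r + int q) m)) * FB (int q) m)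
     = (\<Sum>q<N. f (int q)) + (\<Sum>q<N. g (int q))"
    unfolding f_def g_def cpart_sum cpart_mult sum.distrib[symmetric]
    by (intro sum.cong refl) (simp add: algebra_simps)
  show ?thesis unfolding L R shift_sum[of N f, OF N fp] shift_sum[of N g, OF N gp] ..
qed

lemma bcirc_z_mult:
  assumes tA: "tensor_dim n n N A" and tB: "tensor_dim n n N B" and n: "0 < n" and N: "0 < N"
  shows "bcirc_z n n N (qt_prod n n n N A B) = bcirc_z n n N A * bcirc_z n n N B"
proof (rule eq_matI)
  have cA: "bcirc_z n n N A \<in> carrier_mat (n*N) (n*N)" by (rule bcirc_z_carrier)
  have cB: "bcirc_z n n N B \<in> carrier_mat (n*N) (n*N)" by (rule bcirc_z_carrier)
  have cX: "bcirc_z n n N (qt_prod n n n N A B) \<in> carrier_mat (n*N) (n*N)" by (rule bcirc_z_carrier)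
  show "dim_row (bcirc_z n n N (qt_prod n n n N A B)) = dim_row (bcirc_z n n N A * bcirc_z n n N B)"
    "dim_col (bcirc_z n n N (qt_prod n n n N A B)) = dim_col (bcirc_z n n N A * bcirc_z n n N B)"
    using cA cB cX by auto
  fix i j assume "i < dim_row (bcirc_z n n N A * bcirc_z n n N B)" "j < dim_col (bcirc_z n n N A * bcirc_z n n N B)"
  then have ij: "i < n*N" "j < n*N" using cA cB by auto
  define p where "p = int (i div n)"
  define r where "r = int (j div n)"
  define a where "a = i mod n"
  define b where "b = j mod n"
  have a: "a < n" and b: "b < n" using n by (auto simp: a_def b_def)
  define FA where "FA x m = tf N A x $$ (a,m)" for x m
  define FB where "FB x m = tf N B x $$ (m,b)" for x m
  have pA: "FA x m = FA (x mod int N) m" for x m unfolding FA_def by (simp add: tf_def)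
  have pB: "FB x m = FB (x mod int N) m" for x m unfolding FB_def by (simp add: tf_def)
  define S1 where "S1 = (\<Sum>q<N. \<Sum>m<n. (dpart (FA (p - r - int q) m) + cpart (FA (p - r + int q) m)) * FB (int q) m)"
  define S2 where "S2 = (\<Sum>q<N. \<Sum>m<n. (dpart (FA (p + r - int q) m) + cpart (FA (p + r + int q) m)) * FB (int q) m)"
  define RR where "RR = (\<Sum>q<N. \<Sum>m<n. (dpart (FA (p - int q) m) + cpart (FA (p + int q) m)) *
              (dpart (FB (int q - r) m) + cpart (FB (int q + r) m)))"
  have L: "bcirc_z n n N (qt_prod n n n N A B) $$ (i,j) = dpart S1 + cpart S2"
    unfolding bcirc_z_index[OF qt_prod_dim n N ij] a_def[symmetric] b_def[symmetric]
      p_def[symmetric] r_def[symmetric] S1_def S2_def FA_def FB_def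
      qt_prod_tf[OF tA tB n N a b] ..
  have R: "(bcirc_z n n N A * bcirc_z n n N B) $$ (i,j) = RR"
  proof -
    have "(bcirc_z n n N A * bcirc_z n n N B) $$ (i,j) = (\<Sum>l<n*N. bcirc_z n n N A $$ (i,l) * bcirc_z n n N B $$ (l,j))"
      using cA cB ij by (subst mult_mat_sum) auto
    also have "\<dots> = (\<Sum>q<N. \<Sum>m<n. bcirc_z n n N A $$ (i,q*n+m) * bcirc_z n n N B $$ (q*n+m,j))"
      by (rule sum_split_blocks)
    also have "\<dots> = RR" unfolding RR_def
    proof (intro sum.cong refl)
      fix q m assume q: "q \<in> {..<N}" and m: "m \<in> {..<n}"
      have lt2: "q*n+m < n*N" using block_lt[of q N m n] q m by (simp add: mult.commute)
      show "bcirc_z n n N A $$ (i,q*n+m) * bcirc_z n n N B $$ (q*n+m,j) =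
        (dpart (FA (p - int q) m) + cpart (FA (p + int q) m)) *
              (dpart (FB (int q - r) m) + cpart (FB (int q + r) m))"
        unfolding bcirc_z_index[OF tA n N ij(1) lt2] bcirc_z_index[OF tB n N lt2 ij(2)]
        using m n by (simp add: FA_def FB_def p_def r_def a_def b_def add.commute)
    qed
    finally show ?thesis .
  qed
  have d: "dpart RR = dpart S1" unfolding RR_def S1_def by (rule core_d[of N FA FB, OF N pA pB])
  have c: "cpart RR = cpart S2" unfolding RR_def S2_def by (rule core_c[of N FA FB, OF N pA pB])
  show "bcirc_z n n N (qt_prod n n n N A B) $$ (i,j) = (bcirc_z n n N A * bcirc_z n n N B) $$ (i,j)"
    unfolding L R by (rule quat_eqI) (simp_all add: d c)
qed

lemma qt_id_dim: "tensor_dim n n N (qt_id n N)"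
  by (auto simp: tensor_dim_def qt_id_def)

lemma qt_pow_dim: "tensor_dim n n N A \<Longrightarrow> tensor_dim n n N (qt_pow n N A k)"
  by (induction n N A k rule: qt_pow.induct) (auto simp: qt_id_dim qt_prod_dim)

lemma tf_qt_id: "0 < N \<Longrightarrow> tf N (qt_id n N) x = (if x mod int N = 0 then 1\<^sub>m n else 0\<^sub>m n n)"
proof -
  assume N: "0 < N"
  have "nat (x mod int N) < N" using N by (simp add: nat_less_iff)
  moreover have "0 \<le> x mod int N" using N by simp
  then have "(nat (x mod int N) = 0) = (x mod int N = 0)" by auto
  ultimately show ?thesis by (simp add: tf_def qt_id_def)
qed

lemma mod_diff_zero_iff:
  fixes p r :: int
  assumes "0 \<le> p" "p < N" "0 \<le> r" "r < N"
  shows "((p - r) mod N = 0) = (p = r)"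
proof
  assume h: "(p - r) mod N = 0"
  show "p = r"
  proof (cases "p \<ge> r")
    case True
    then have "(p - r) mod N = p - r" using assms by (intro mod_pos_pos_trivial) auto
    then show ?thesis using h by simp
  next
    case False
    have "(p - r) mod N = (p - r + N) mod N" by simp
    also have "\<dots> = p - r + N" using assms False by (intro mod_pos_pos_trivial) auto
    finally show ?thesis using h False assms by simp
  qed
qed simp

lemma bcirc_z_id:
  assumes n: "0 < n" and N: "0 < N"
  shows "bcirc_z n n N (qt_id n N) = 1\<^sub>m (n*N)"
proof (rule eq_matI)
  have c: "bcirc_z n n N (qt_id n N) \<in> carrier_mat (n*N) (n*N)" by (rule bcirc_z_carrier)
  then show "dim_row (bcirc_z n n N (qt_id n N)) = dim_row (1\<^sub>m (n*N))"
    "dim_col (bcirc_z n n N (qt_id n N)) = dim_col (1\<^sub>m (n*N))" by auto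
  fix i j assume "i < dim_row (1\<^sub>m (n*N) :: quat mat)" "j < dim_col (1\<^sub>m (n*N) :: quat mat)"
  then have ij: "i < n*N" "j < n*N" by auto
  have id: "i div n < N" "j div n < N" using ij by (auto simp: less_mult_imp_div_less mult.commute)
  have ab: "i mod n < n" "j mod n < n" using n by auto
  have e: "((int (i div n) - int (j div n)) mod int N = 0) = (i div n = j div n)"
    using mod_diff_zero_iff[of "int (i div n)" "int N" "int (j div n)"] id by simp
  have ij_eq: "(i = j) = (i div n = j div n \<and> i mod n = j mod n)"
    by (metis div_mult_mod_eq)
  show "bcirc_z n n N (qt_id n N) $$ (i,j) = 1\<^sub>m (n*N) $$ (i,j)"
    unfolding bcirc_z_index[OF qt_id_dim n N ij] tf_qt_id[OF N]
    using ij ab e ij_eq by auto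
qed

lemma mult_ind: "x * (if P then 1 else 0) = (if P then x else (0::'a::semiring_1))"
  by simp

lemma sum_ind:
  fixes f :: "nat \<Rightarrow> 'a::semiring_1"
  assumes "b < n"
  shows "(\<Sum>m<n. f m * (if m = b then 1 else 0)) = f b"
proof -
  have "(\<Sum>m<n. f m * (if m = b then 1 else 0)) = (\<Sum>m<n. if m = b then f m else 0)"
    by (rule sum.cong) auto
  then show ?thesis using assms by simp
qed

lemma qt_prod_id_right:
  assumes tB: "tensor_dim n n N B" and n: "0 < n" and N: "0 < N"
  shows "qt_prod n n n N B (qt_id n N) = B"
proof (rule nth_equalityI)
  show "length (qt_prod n n n N B (qt_id n N)) = length B"
    using tB qt_prod_dim[of n N B "qt_id n N"] by (simp add: tensor_dim_def)
  fix s assume "s < length (qt_prod n n n N B (qt_id n N))"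
  then have s: "s < N" using qt_prod_dim[of n N B "qt_id n N"] by (simp add: tensor_dim_def)
  have cB: "B ! s \<in> carrier_mat n n" using tB s by (auto simp: tensor_dim_def)
  have cX: "qt_prod n n n N B (qt_id n N) ! s \<in> carrier_mat n n"
    using qt_prod_dim[of n N B "qt_id n N"] s by (auto simp: tensor_dim_def)
  show "qt_prod n n n N B (qt_id n N) ! s = B ! s"
  proof (rule eq_matI)
    show "dim_row (qt_prod n n n N B (qt_id n N) ! s) = dim_row (B ! s)"
      "dim_col (qt_prod n n n N B (qt_id n N) ! s) = dim_col (B ! s)" using cB cX by auto
    fix a b assume "a < dim_row (B ! s)" "b < dim_col (B ! s)"
    then have a: "a < n" and b: "b < n" using cB by auto
    have "(qt_prod n n n N B (qt_id n N) ! s) $$ (a,b) = (\<Sum>q<N. \<Sum>m<n.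
       (dpart (tf N B (int s - int q) $$ (a,m)) + cpart (tf N B (int s + int q) $$ (a,m))) * (qt_id n N ! q) $$ (m,b))"
      by (rule qt_prod_slice[OF tB qt_id_dim n N s a b])
    also have "\<dots> = (\<Sum>q<N. if q = 0 then dpart (tf N B (int s) $$ (a,b)) + cpart (tf N B (int s) $$ (a,b)) else 0)"
      using b by (intro sum.cong refl) (auto simp: qt_id_def sum_ind)
    also have "\<dots> = dpart (tf N B (int s) $$ (a,b)) + cpart (tf N B (int s) $$ (a,b))"
      using N by (simp add: sum.delta)
    also have "\<dots> = B ! s $$ (a,b)" using s by (simp add: tf_nat quat_split[symmetric])
    finally show "(qt_prod n n n N B (qt_id n N) ! s) $$ (a,b) = B ! s $$ (a,b)" .
  qed
qed

lemma pow_mat_commute: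
  fixes M :: "'a::semiring_1 mat"
  assumes "M \<in> carrier_mat m m"
  shows "M * M ^\<^sub>m k = M ^\<^sub>m k * M"
proof (induction k)
  case 0 then show ?case using assms by simp
next
  case (Suc k)
  have "M * M ^\<^sub>m Suc k = (M * M ^\<^sub>m k) * M" using assms by (simp add: assoc_mult_mat[symmetric, of _ m m _ m _ m])
  also have "\<dots> = M ^\<^sub>m Suc k * M" using Suc by simp
  finally show ?case .
qed

lemma qt_inverse_bcirc:
  assumes tA: "tensor_dim n n N A" and n: "0 < n" and N: "0 < N" and inv: "qt_is_inverse n N A B"
  shows "bcirc_z n n N A * bcirc_z n n N B = 1\<^sub>m (n*N)" "bcirc_z n n N B * bcirc_z n n N A = 1\<^sub>m (n*N)"
proof -
  have tB: "tensor_dim n n N B" using inv by (simp add: qt_is_inverse_def)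
  show "bcirc_z n n N A * bcirc_z n n N B = 1\<^sub>m (n*N)"
    using inv bcirc_z_mult[OF tA tB n N] bcirc_z_id[OF n N] by (simp add: qt_is_inverse_def)
  show "bcirc_z n n N B * bcirc_z n n N A = 1\<^sub>m (n*N)"
    using inv bcirc_z_mult[OF tB tA n N] bcirc_z_id[OF n N] by (simp add: qt_is_inverse_def)
qed

lemma qt_inverse_unique:
  assumes tA: "tensor_dim n n N A" and n: "0 < n" and N: "0 < N"
    and i1: "qt_is_inverse n N A B1" and i2: "qt_is_inverse n N A B2"
  shows "B1 = B2"
proof -
  have t1: "tensor_dim n n N B1" and t2: "tensor_dim n n N B2"
    using i1 i2 by (simp_all add: qt_is_inverse_def)
  let ?A = "bcirc_z n n N A" and ?B1 = "bcirc_z n n N B1" and ?B2 = "bcirc_z n n N B2"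
  have cA: "?A \<in> carrier_mat (n*N) (n*N)" and c1: "?B1 \<in> carrier_mat (n*N) (n*N)"
    and c2: "?B2 \<in> carrier_mat (n*N) (n*N)" by (rule bcirc_z_carrier)+
  have "?B1 = ?B1 * (?A * ?B2)" using qt_inverse_bcirc(1)[OF tA n N i2] c1 by simp
  also have "\<dots> = (?B1 * ?A) * ?B2" using cA c1 c2 by (simp add: assoc_mult_mat)
  also have "\<dots> = ?B2" using qt_inverse_bcirc(2)[OF tA n N i1] c2 by simp
  finally have eq: "?B1 = ?B2" .
  have "B1 = qt_prod n n n N B1 (qt_id n N)" using qt_prod_id_right[OF t1 n N] by simp
  also have "\<dots> = qt_prod n n n N B2 (qt_id n N)" unfolding qt_prod_def eq ..
  also have "\<dots> = B2" using qt_prod_id_right[OF t2 n N] by simp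
  finally show ?thesis .
qed

theorem lemma3p4:
  fixes n n3 :: nat and A :: "quat mat list"
  assumes "0 < n" and "0 < n3"
    and "tensor_dim n n n3 A"
  shows "(\<forall>k::nat. 1 \<le> k \<longrightarrow> bcirc_z n n n3 (qt_pow n n3 A k) = bcirc_z n n n3 A ^\<^sub>m k) \<and>
         (qt_invertible n n3 A \<longrightarrow>
           inverts_mat (bcirc_z n n n3 A) (bcirc_z n n n3 (qt_inv n n3 A)) \<and>
           inverts_mat (bcirc_z n n n3 (qt_inv n n3 A)) (bcirc_z n n n3 A))"
proof (intro conjI allI impI)
  note n = assms(1) and N = assms(2) and tA = assms(3)
  let ?M = "bcirc_z n n n3 A"
  have cM: "?M \<in> carrier_mat (n*n3) (n*n3)" by (rule bcirc_z_carrier)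
  have P: "bcirc_z n n n3 (qt_pow n n3 A (Suc k)) = ?M ^\<^sub>m Suc k" for k
  proof (induction k)
    case 0 then show ?case using cM by simp
  next
    case (Suc k)
    have "bcirc_z n n n3 (qt_pow n n3 A (Suc (Suc k))) = ?M * bcirc_z n n n3 (qt_pow n n3 A (Suc k))"
      using bcirc_z_mult[OF tA qt_pow_dim[OF tA] n N] by simp
    also have "\<dots> = ?M * ?M ^\<^sub>m Suc k" using Suc by simp
    also have "\<dots> = ?M ^\<^sub>m Suc (Suc k)" using pow_mat_commute[OF cM, of "Suc k"] by simp
    finally show ?case .
  qed
  fix k :: nat assume "1 \<le> k"
  then obtain k' where "k = Suc k'" by (cases k) auto
  then show "bcirc_z n n n3 (qt_pow n n3 A k) = ?M ^\<^sub>m k" using P by simp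
next
  note n = assms(1) and N = assms(2) and tA = assms(3)
  assume "qt_invertible n n3 A"
  then obtain B where B: "qt_is_inverse n n3 A B" by (auto simp: qt_invertible_def)
  have "qt_inv n n3 A = B" unfolding qt_inv_def
    using B qt_inverse_unique[OF tA n N] by blast
  then show "inverts_mat (bcirc_z n n n3 A) (bcirc_z n n n3 (qt_inv n n3 A))"
    "inverts_mat (bcirc_z n n n3 (qt_inv n n3 A)) (bcirc_z n n n3 A)"
    using qt_inverse_bcirc[OF tA n N B] bcirc_z_carrier[of n n3 A] bcirc_z_carrier[of n n3 B]
    by (auto simp: inverts_mat_def)
qed

end
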